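(* Let $\mathbb{D}$ be a division ring with $\operatorname{char}\mathbb{D}\ne 2,3$, let $n\ge 1$, and let $C\in M_n(\mathbb{D})$. Let $\mathbb{D}^n$ denote the space of column vectors $x=(x_1,\dots,x_n)^T$ with entries in $\mathbb{D}$. If for all $a,b\in\mathbb{D}^n$, $a^Tb=0$ implies $a^TCb=0$, then $C=\lambda I$ for some $\lambda\in\mathbb{D}$. *)

theory Defs
  imports "HOL-Analysis.Analysis"
begin

text \<open>Column vectors in D^n are rendered as 'a ^ 'n with a finite index type 'n
  (so n = CARD('n) >= 1); n x n matrices as 'a ^ 'n ^ 'n (row index first).
  Products are written out respecting the order of factors, since D need not
  be commutative.\<close>

definition vdot :: "'a::division_ring ^ 'n ^ 'n \<Rightarrow> 'a ^ 'n \<Rightarrow> 'a ^ 'n \<Rightarrow> 'a" where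
  "vdot C a b = (\<Sum>i\<in>UNIV. \<Sum>j\<in>UNIV. a $ i * C $ i $ j * b $ j)"

definition tdot :: "'a::division_ring ^ 'n \<Rightarrow> 'a ^ 'n \<Rightarrow> 'a" where
  "tdot a b = (\<Sum>i\<in>UNIV. a $ i * b $ i)"

end

theory Submission
  imports Defs
begin

lemma vdot_add_left: "vdot C (a + a') b = vdot C a b + vdot C a' b"
  by (simp add: vdot_def distrib_right sum.distrib)

lemma vdot_diff_right: "vdot C a (b - b') = vdot C a b - vdot C a b'"
  by (simp add: vdot_def right_diff_distrib sum_subtractf)

lemma tdot_add_left: "tdot (a + a') b = tdot a b + tdot a' b"
  by (simp add: tdot_def distrib_right sum.distrib)

lemma tdot_diff_right: "tdot a (b - b') = tdot a b - tdot a b'"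
  by (simp add: tdot_def right_diff_distrib sum_subtractf)

lemma vdot_axis: "vdot C (axis i 1) (axis j 1) = C $ i $ j"
proof -
  have "vdot C (axis i 1) (axis j 1) = (\<Sum>i'\<in>UNIV. \<Sum>j'\<in>UNIV.
      (if i' = i then (if j' = j then C $ i' $ j' else 0) else 0))"
    unfolding vdot_def axis_def by (intro sum.cong refl) auto
  also have "\<dots> = (\<Sum>i'\<in>UNIV. if i' = i then C $ i $ j else 0)"
    by (intro sum.cong refl) (simp add: sum.delta)
  also have "\<dots> = C $ i $ j" by (simp add: sum.delta)
  finally show ?thesis .
qed

lemma tdot_axis: "tdot (axis i 1) (axis j (1::'a::division_ring)) = (if i = j then 1 else 0)"
proof -
  have "tdot (axis i 1) (axis j (1::'a)) = (\<Sum>i'\<in>UNIV. if i' = i then (if i' = j then 1 else 0) else (0::'a))"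
    unfolding tdot_def axis_def by (intro sum.cong refl) auto
  also have "\<dots> = (if i = j then 1 else 0)" by (simp add: sum.delta)
  finally show ?thesis .
qed

theorem lemma3p2:
  fixes C :: "'a::division_ring ^ 'n::finite ^ 'n"
  assumes "(2::'a) \<noteq> 0" and "(3::'a) \<noteq> 0"
    and "\<forall>a b :: 'a ^ 'n. tdot a b = 0 \<longrightarrow> vdot C a b = 0"
  shows "\<exists>c::'a. C = mat c"
proof -
  note H = assms(3)[rule_format]
  have off: "C $ i $ j = 0" if "i \<noteq> j" for i j
    using H[of "axis i 1" "axis j 1"] that by (simp add: vdot_axis tdot_axis)
  have diag: "C $ i $ i = C $ j $ j" for i j
  proof (cases "i = j")
    case False
    have "tdot (axis i 1 + axis j 1) (axis i 1 - axis j 1) = 0"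
      using False by (simp add: tdot_add_left tdot_diff_right tdot_axis)
    then have "vdot C (axis i 1 + axis j 1) (axis i 1 - axis j 1) = 0" by (rule H)
    then show ?thesis using False off[of i j] off[of j i]
      by (simp add: vdot_add_left vdot_diff_right vdot_axis)
  qed simp
  obtain k :: 'n where True by simp
  have "C = mat (C $ k $ k)"
    by (simp add: vec_eq_iff mat_def off) (metis diag off)
  then show ?thesis by blast
qed

end
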